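(* Let $\mathbb{X},\mathbb{Y}$ be Banach spaces, $\varphi:\mathbb{X}\to\mathbb{Y}$ a mapping and $\bar x\in\mathbb{X}$. Suppose that $\varphi$ is Fréchet differentiable at $\bar x$, with derivative $\nabla\varphi(\bar x)$, and that there exist $\kappa,r>0$ such that $$\mathbf{d}(\bar x,\varphi^{-1}(y))\le \kappa\,\|\varphi(\bar x)-y\|\quad\text{for all } y\in\mathbb{Y}\text{ with }\|y-\varphi(\bar x)\|<r.$$ Then $\nabla\varphi(\bar x)(\mathbb{X})$ is a closed linear subspace of $\mathbb{Y}$.
   Context: For a subset $D$ of a normed space, $\mathbf{d}(x,D):=\inf\{\|x-y\|:y\in D\}$ (with $\inf\emptyset=+\infty$), and $\varphi^{-1}(y):=\{x\in\mathbb{X}:\varphi(x)=y\}$. *)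

theory Defs
  imports "HOL-Analysis.Analysis"
begin

text \<open>Distance from a point to a set, with the convention inf of the empty set = +infinity
  (hence extended-real valued).\<close>
definition dist_set :: "'a::real_normed_vector \<Rightarrow> 'a set \<Rightarrow> ereal" where
  "dist_set x D = (INF y\<in>D. ereal (norm (x - y)))"

end

theory Submission
  imports Defs
begin

theorem proposition3p1:
  fixes \<phi> :: "'a::banach \<Rightarrow> 'b::banach"
    and D :: "'a \<Rightarrow> 'b"
    and xbar :: 'a
    and \<kappa> r :: real
  assumes deriv: "(\<phi> has_derivative D) (at xbar)"
    and kpos: "\<kappa> > 0" and rpos: "r > 0"
    and reg: "\<And>y. norm (y - \<phi> xbar) < r \<Longrightarrow>
               dist_set xbar (\<phi> -` {y}) \<le> ereal (\<kappa> * norm (\<phi> xbar - y))"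
  shows "subspace (range D) \<and> closed (range D)"
proof -
  have bl: "bounded_linear D" and dd0: "\<forall>e>0. \<exists>d>0. \<forall>z. norm(z - xbar) < d \<longrightarrow> norm (\<phi> z - \<phi> xbar - D(z - xbar)) \<le> e * norm (z - xbar)"
    using deriv unfolding has_derivative_at_alt by auto
  interpret D: bounded_linear D by (rule bl)
  have A: "\<exists>x. norm x \<le> 2*\<kappa>*norm y \<and> norm (y - D x) \<le> norm y / 2" for y
  proof (cases "y = 0")
    case True then show ?thesis by (intro exI[of _ 0]) auto
  next
    case False
    then have ny: "norm y > 0" by simp
    obtain d where d: "d > 0" and dd: "\<And>z. norm(z - xbar) < d \<Longrightarrow> norm (\<phi> z - \<phi> xbar - D(z - xbar)) \<le> (1/(4*\<kappa>)) * norm (z - xbar)"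
      using dd0 kpos by (metis divide_pos_pos mult_pos_pos zero_less_numeral zero_less_one)
    define t where "t = min (r/(2*norm y)) (d/(4*\<kappa>*norm y))"
    have tpos: "t > 0" using ny d rpos kpos by (simp add: t_def)
    have t1: "t * norm y < r"
    proof -
      have "t * norm y \<le> (r/(2*norm y)) * norm y" using ny by (intro mult_right_mono) (auto simp: t_def)
      also have "\<dots> = r/2" using ny by simp
      finally show ?thesis using rpos by simp
    qed
    have t2: "2*\<kappa>*t*norm y < d"
    proof -
      have "t * norm y \<le> (d/(4*\<kappa>*norm y)) * norm y" using ny by (intro mult_right_mono) (auto simp: t_def)
      also have "\<dots> = d/(4*\<kappa>)" using ny by simp
      finally have "t * norm y \<le> d/(4*\<kappa>)" .
      then have "2*\<kappa>*(t*norm y) \<le> 2*\<kappa>*(d/(4*\<kappa>))" using kpos by (intro mult_left_mono) auto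
      also have "\<dots> = d/2" using kpos by simp
      finally show ?thesis using d by (simp add: mult.assoc)
    qed
    define w where "w = \<phi> xbar + t *\<^sub>R y"
    have nw: "norm (w - \<phi> xbar) = t * norm y" using tpos by (simp add: w_def)
    have nw2: "norm (\<phi> xbar - w) = t * norm y" using tpos by (simp add: w_def)
    have "dist_set xbar (\<phi> -` {w}) \<le> ereal (\<kappa> * (t * norm y))"
      using reg[of w] nw nw2 t1 by simp
    also have "\<dots> < ereal (2*\<kappa>*t*norm y)" using kpos tpos ny by simp
    finally have "(INF z\<in>\<phi> -` {w}. ereal (norm (xbar - z))) < ereal (2*\<kappa>*t*norm y)"
      unfolding dist_set_def .
    then obtain z where z: "\<phi> z = w" and zn: "norm (xbar - z) < 2*\<kappa>*t*norm y"
      unfolding INF_less_iff by auto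
    have zn': "norm (z - xbar) < 2*\<kappa>*t*norm y" using zn by (simp add: norm_minus_commute)
    have "norm (t *\<^sub>R y - D(z - xbar)) = norm (\<phi> z - \<phi> xbar - D(z - xbar))"
      using z by (simp add: w_def)
    also have "\<dots> \<le> (1/(4*\<kappa>)) * norm (z - xbar)" using dd zn' t2 by auto
    also have "\<dots> \<le> (1/(4*\<kappa>)) * (2*\<kappa>*t*norm y)" using zn' kpos by (intro mult_left_mono) auto
    also have "\<dots> = t * norm y / 2" using kpos by simp
    finally have est: "norm (t *\<^sub>R y - D(z - xbar)) \<le> t * norm y / 2" .
    define x where "x = (1/t) *\<^sub>R (z - xbar)"
    have "y - D x = (1/t) *\<^sub>R (t *\<^sub>R y - D(z - xbar))"
      using tpos by (simp add: x_def D.scaleR[symmetric] scaleR_diff_right)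
    then have "norm (y - D x) = (1/t) * norm (t *\<^sub>R y - D(z - xbar))" using tpos by simp
    also have "\<dots> \<le> (1/t) * (t * norm y / 2)" using est tpos by (intro mult_left_mono) auto
    also have "\<dots> = norm y / 2" using tpos by simp
    finally have e1: "norm (y - D x) \<le> norm y / 2" .
    have "norm x = (1/t) * norm (z - xbar)" using tpos by (simp add: x_def)
    also have "\<dots> \<le> (1/t) * (2*\<kappa>*t*norm y)" using zn' tpos by (intro mult_left_mono) auto
    also have "\<dots> = 2*\<kappa>*norm y" using tpos by simp
    finally show ?thesis using e1 by blast
  qed
  then obtain g where g: "\<And>y. norm (g y) \<le> 2*\<kappa>*norm y \<and> norm (y - D (g y)) \<le> norm y / 2"
    by metis
  have surj: "y \<in> range D" for y
  proof -
    define res where "res n = ((\<lambda>u. u - D (g u)) ^^ n) y" for n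
    have res_Suc: "res (Suc n) = res n - D (g (res n))" for n by (simp add: res_def)
    have resb: "norm (res n) \<le> (1/2)^n * norm y" for n
    proof (induction n)
      case 0 then show ?case by (simp add: res_def)
    next
      case (Suc n)
      have "norm (res (Suc n)) \<le> norm (res n) / 2" using g[of "res n"] by (simp add: res_Suc)
      also have "\<dots> \<le> (1/2)^n * norm y / 2" using Suc by simp
      finally show ?case by simp
    qed
    define x where "x n = g (res n)" for n
    have xb: "norm (x n) \<le> 2*\<kappa>*norm y * (1/2)^n" for n
    proof -
      have "norm (x n) \<le> 2*\<kappa>*norm (res n)" using g[of "res n"] by (simp add: x_def)
      also have "\<dots> \<le> 2*\<kappa>*((1/2)^n * norm y)" using resb[of n] kpos by (intro mult_left_mono) auto
      finally show ?thesis by (simp add: algebra_simps)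
    qed
    have sx: "summable x"
      by (rule summable_comparison_test[OF _ summable_mult[OF summable_geometric[of "1/2::real"]]])
         (use xb in auto)
    have partial: "(\<Sum>k<n. D (x k)) = y - res n" for n
      by (induction n) (auto simp: res_def x_def res_Suc[unfolded res_def])
    have "res \<longlonglongrightarrow> 0"
    proof (rule tendsto_norm_zero_cancel, rule tendsto_sandwich[of "\<lambda>_. 0" _ _ "\<lambda>n. (1/2)^n * norm y"])
      show "\<forall>\<^sub>F n in sequentially. 0 \<le> norm (res n)" by simp
      show "\<forall>\<^sub>F n in sequentially. norm (res n) \<le> (1/2)^n * norm y" using resb by simp
      show "(\<lambda>n. 0) \<longlonglongrightarrow> 0" by simp
      show "(\<lambda>n. (1/2::real)^n * norm y) \<longlonglongrightarrow> 0"
        by (intro tendsto_mult_left_zero LIMSEQ_power_zero) auto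
    qed
    then have "(\<lambda>n. y - res n) \<longlonglongrightarrow> y - 0" by (intro tendsto_intros)
    then have "(\<lambda>k. D (x k)) sums y" unfolding sums_def partial by simp
    moreover have "(\<lambda>k. D (x k)) sums D (suminf x)"
      using D.sums[OF summable_sums[OF sx]] .
    ultimately have "D (suminf x) = y" using sums_unique2 by blast
    then show ?thesis by (metis rangeI)
  qed
  then have "range D = UNIV" by auto
  then show ?thesis by (simp add: subspace_UNIV)
qed

end
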